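(* Let $\rho:\mathfrak g\to\mathfrak{gl}(V)$ be a representation of a Lie algebra $\mathfrak g$. Define $\Phi:\mathrm{Hom}(\wedge^kV,\mathfrak g)\to\mathrm{Hom}(\wedge^kV\otimes V,V)$, $k\ge0$, by $\Phi(f)(u_1,\dots,u_k,u_{k+1})=\rho(f(u_1,\dots,u_k))(u_{k+1})$. Then $\Phi$ is a homomorphism of graded Lie algebras from $(\mathcal C^*(V,\mathfrak g),[\![\cdot,\cdot]\!])$ to $(C^*(V,V),[\cdot,\cdot]^C)$, i.e. $\Phi([\![P,Q]\!])=[\Phi(P),\Phi(Q)]^C$ for all $P\in\mathrm{Hom}(\wedge^nV,\mathfrak g)$, $Q\in\mathrm{Hom}(\wedge^mV,\mathfrak g)$.
   Context: All vector spaces finite-dimensional over an algebraically closed field of characteristic $0$. $\mathbb S_{(i_1,\dots,i_k)}$ denotes unshuffles (permutations increasing on consecutive blocks of sizes $i_1,\dots,i_k$). $\mathcal C^*(V,\mathfrak g)=\bigoplus_k\mathrm{Hom}(\wedge^kV,\mathfrak g)$ with bracket $[\![P,Q]\!](u_1,\dots,u_{m+n})=\sum_{\sigma\in\mathbb S_{(m,1,n-1)}}(-1)^{\sigma}P(\rho(Q(u_{\sigma(1)},\dots,u_{\sigma(m)}))u_{\sigma(m+1)},u_{\sigma(m+2)},\dots,u_{\sigma(m+n)})-(-1)^{mn}\sum_{\sigma\in\mathbb S_{(n,1,m-1)}}(-1)^{\sigma}Q(\rho(P(u_{\sigma(1)},\dots,u_{\sigma(n)}))u_{\sigma(n+1)},u_{\sigma(n+2)},\dots,u_{\sigma(m+n)})+(-1)^{mn}\sum_{\sigma\in\mathbb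 S_{(n,m)}}(-1)^{\sigma}[P(u_{\sigma(1)},\dots,u_{\sigma(n)}),Q(u_{\sigma(n+1)},\dots,u_{\sigma(m+n)})]$ for $P\in\mathrm{Hom}(\wedge^nV,\mathfrak g)$, $Q\in\mathrm{Hom}(\wedge^mV,\mathfrak g)$. $C^*(V,V)=\bigoplus_{k\ge0}\mathrm{Hom}(\wedge^kV\otimes V,V)$; for $\alpha\in\mathrm{Hom}(\wedge^nV\otimes V,V)$, $\beta\in\mathrm{Hom}(\wedge^mV\otimes V,V)$, define $(\alpha\circ\beta)(u_1,\dots,u_{m+n+1})=\sum_{\sigma\in\mathbb S_{(m,1,n-1)}}(-1)^{\sigma}\alpha(\beta(u_{\sigma(1)},\dots,u_{\sigma(m+1)}),u_{\sigma(m+2)},\dots,u_{\sigma(m+n)},u_{m+n+1})+(-1)^{mn}\sum_{\sigma\in\mathbb S_{(n,m)}}(-1)^{\sigma}\alpha(u_{\sigma(1)},\dots,u_{\sigma(n)},\beta(u_{\sigma(n+1)},\dots,u_{\sigma(m+n)},u_{m+n+1}))$ and $[\alpha,\beta]^C=\alpha\circ\beta-(-1)^{mn}\beta\circ\alpha$; this is a graded Lie algebra with $\mathrm{Hom}(\wedge^kV\otimes V,V)$ in degree $k$. *)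

theory Defs
  imports Main "HOL-Combinatorics.Permutations" "HOL-Computational_Algebra.Polynomial"
begin

definition alg_closed :: "'k::field itself \<Rightarrow> bool" where
  "alg_closed _ \<longleftrightarrow> (\<forall>p :: 'k poly. 0 < degree p \<longrightarrow> (\<exists>x. poly p x = 0))"

definition fin_dim :: "('k::field \<Rightarrow> 'v::ab_group_add \<Rightarrow> 'v) \<Rightarrow> bool" where
  "fin_dim s \<longleftrightarrow> (\<exists>B. finite_dimensional_vector_space s B)"

definition lie_algebra :: "('k::field \<Rightarrow> 'g::ab_group_add \<Rightarrow> 'g) \<Rightarrow> ('g \<Rightarrow> 'g \<Rightarrow> 'g) \<Rightarrow> bool" where
  "lie_algebra sg lb \<longleftrightarrow> vector_space sg
     \<and> (\<forall>y. Vector_Spaces.linear sg sg (\<lambda>x. lb x y))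
     \<and> (\<forall>x. Vector_Spaces.linear sg sg (\<lambda>y. lb x y))
     \<and> (\<forall>x. lb x x = 0)
     \<and> (\<forall>x y z. lb x (lb y z) + lb y (lb z x) + lb z (lb x y) = 0)"

definition lie_rep :: "('k::field \<Rightarrow> 'g::ab_group_add \<Rightarrow> 'g) \<Rightarrow> ('g \<Rightarrow> 'g \<Rightarrow> 'g)
    \<Rightarrow> ('k \<Rightarrow> 'v::ab_group_add \<Rightarrow> 'v) \<Rightarrow> ('g \<Rightarrow> 'v \<Rightarrow> 'v) \<Rightarrow> bool" where
  "lie_rep sg lb sv rho \<longleftrightarrow> vector_space sv
     \<and> (\<forall>x. Vector_Spaces.linear sv sv (rho x))
     \<and> (\<forall>x y v. rho (x + y) v = rho x v + rho y v)
     \<and> (\<forall>c x v. rho (sg c x) v = sv c (rho x v))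
     \<and> (\<forall>x y v. rho (lb x y) v = rho x (rho y v) - rho y (rho x v))"

(* An element of Hom(\<wedge>^k V, W): a map on argument lists, multilinear and alternating
   on lists of length k (its values on other lists are irrelevant). *)
definition alt_multilinear :: "('k::field \<Rightarrow> 'v::ab_group_add \<Rightarrow> 'v) \<Rightarrow> ('k \<Rightarrow> 'w::ab_group_add \<Rightarrow> 'w)
    \<Rightarrow> nat \<Rightarrow> ('v list \<Rightarrow> 'w) \<Rightarrow> bool" where
  "alt_multilinear sv sw k f \<longleftrightarrow>
     (\<forall>us i. length us = k \<longrightarrow> i < k \<longrightarrow> Vector_Spaces.linear sv sw (\<lambda>x. f (us[i := x])))
     \<and> (\<forall>us i j. length us = k \<longrightarrow> i < j \<longrightarrow> j < k \<longrightarrow> us ! i = us ! j \<longrightarrow> f us = 0)"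

(* Unshuffles S_(k_1,...,k_r): permutations of {0..<k_1+...+k_r} (0-based indices)
   increasing on consecutive blocks of sizes k_1,...,k_r *)
definition unshuffles :: "nat list \<Rightarrow> (nat \<Rightarrow> nat) set" where
  "unshuffles ks = {\<sigma>. \<sigma> permutes {0..<sum_list ks} \<and>
     (\<forall>j < length ks. \<forall>a b. sum_list (take j ks) \<le> a \<longrightarrow> a < b \<longrightarrow>
         b < sum_list (take j ks) + ks ! j \<longrightarrow> \<sigma> a < \<sigma> b)}"

(* the arguments u_{\<sigma>(a+1)},...,u_{\<sigma>(b)} in 0-based form *)
definition args :: "'v list \<Rightarrow> (nat \<Rightarrow> nat) \<Rightarrow> nat \<Rightarrow> nat \<Rightarrow> 'v list" where
  "args us \<sigma> a b = map (\<lambda>i. us ! \<sigma> i) [a..<b]"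

definition lbr :: "('k::field \<Rightarrow> 'g::ab_group_add \<Rightarrow> 'g) \<Rightarrow> ('g \<Rightarrow> 'g \<Rightarrow> 'g) \<Rightarrow> ('g \<Rightarrow> 'v \<Rightarrow> 'v)
    \<Rightarrow> nat \<Rightarrow> nat \<Rightarrow> ('v list \<Rightarrow> 'g) \<Rightarrow> ('v list \<Rightarrow> 'g) \<Rightarrow> 'v list \<Rightarrow> 'g" where
  "lbr sg lb rho n m P Q us =
     (if n = 0 then 0 else
       (\<Sum>\<sigma>\<in>unshuffles [m, 1, n - 1]. sg (of_int (sign \<sigma>))
          (P (rho (Q (args us \<sigma> 0 m)) (us ! \<sigma> m) # args us \<sigma> (m + 1) (m + n)))))
   - sg ((-1) ^ (m * n))
     (if m = 0 then 0 else
       (\<Sum>\<sigma>\<in>unshuffles [n, 1, m - 1]. sg (of_int (sign \<sigma>))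
          (Q (rho (P (args us \<sigma> 0 n)) (us ! \<sigma> n) # args us \<sigma> (n + 1) (m + n)))))
   + sg ((-1) ^ (m * n))
       (\<Sum>\<sigma>\<in>unshuffles [n, m]. sg (of_int (sign \<sigma>))
          (lb (P (args us \<sigma> 0 n)) (Q (args us \<sigma> n (n + m)))))"

(* alpha \<circ> beta for alpha \<in> Hom(\<wedge>^n V \<otimes> V, V), beta \<in> Hom(\<wedge>^m V \<otimes> V, V);
   us = [u_1,...,u_{m+n+1}] *)
definition compC :: "('k::field \<Rightarrow> 'v::ab_group_add \<Rightarrow> 'v) \<Rightarrow> nat \<Rightarrow> nat
    \<Rightarrow> ('v list \<Rightarrow> 'v) \<Rightarrow> ('v list \<Rightarrow> 'v) \<Rightarrow> 'v list \<Rightarrow> 'v" where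
  "compC sv n m \<alpha> \<beta> us =
     (if n = 0 then 0 else
       (\<Sum>\<sigma>\<in>unshuffles [m, 1, n - 1]. sv (of_int (sign \<sigma>))
          (\<alpha> (\<beta> (args us \<sigma> 0 (m + 1)) # args us \<sigma> (m + 1) (m + n) @ [us ! (m + n)]))))
   + sv ((-1) ^ (m * n))
       (\<Sum>\<sigma>\<in>unshuffles [n, m]. sv (of_int (sign \<sigma>))
          (\<alpha> (args us \<sigma> 0 n @ [\<beta> (args us \<sigma> n (n + m) @ [us ! (m + n)])])))"

definition brC :: "('k::field \<Rightarrow> 'v::ab_group_add \<Rightarrow> 'v) \<Rightarrow> nat \<Rightarrow> nat
    \<Rightarrow> ('v list \<Rightarrow> 'v) \<Rightarrow> ('v list \<Rightarrow> 'v) \<Rightarrow> 'v list \<Rightarrow> 'v" where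
  "brC sv n m \<alpha> \<beta> us = compC sv n m \<alpha> \<beta> us - sv ((-1) ^ (m * n)) (compC sv m n \<beta> \<alpha> us)"

definition Phi :: "('g \<Rightarrow> 'v \<Rightarrow> 'v) \<Rightarrow> nat \<Rightarrow> ('v list \<Rightarrow> 'g) \<Rightarrow> 'v list \<Rightarrow> 'v" where
  "Phi rho k f us = rho (f (take k us)) (us ! k)"

end

theory Submission
  imports Defs
begin


definition rot :: "nat \<Rightarrow> nat \<Rightarrow> nat \<Rightarrow> nat" where
  "rot a b i = (if i < a then i + b else if i < a + b then i - a else i)"

definition cyc :: "nat \<Rightarrow> nat \<Rightarrow> nat" where
  "cyc N i = (if i < N then (if Suc i = N then 0 else Suc i) else i)"

lemma cyc_Suc: "cyc (Suc N) = transpose 0 N \<circ> cyc N"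
  by (rule ext) (auto simp: cyc_def transpose_def)

lemma cyc_perm: "permutation (cyc N)"
proof (induction N)
  case 0
  have "cyc 0 = id" by (rule ext) (simp add: cyc_def)
  then show ?case by simp
next
  case (Suc N)
  show ?case unfolding cyc_Suc by (rule permutation_compose[OF permutation_swap_id Suc.IH])
qed

lemma sign_cyc: "sign (cyc N) = (-1) ^ (N - 1)"
proof (induction N)
  case 0
  have "cyc 0 = id" by (rule ext) (simp add: cyc_def)
  then show ?case by simp
next
  case (Suc N)
  have "sign (cyc (Suc N)) = sign (transpose 0 N) * sign (cyc N)"
    by (simp add: cyc_Suc sign_compose permutation_swap_id cyc_perm)
  also have "\<dots> = (-1) ^ (Suc N - 1)"
    using Suc by (cases N) (auto simp: sign_swap_id)
  finally show ?case .
qed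

lemma cyc_pow: "(cyc N ^^ k) i = (if i < N then (i + k) mod N else i)"
proof (induction k)
  case 0 then show ?case by simp
next
  case (Suc k)
  then show ?case by (auto simp: cyc_def mod_Suc)
qed

lemma sign_pow: "permutation p \<Longrightarrow> permutation (p ^^ k) \<and> sign (p ^^ k) = sign p ^ k"
  by (induction k) (auto simp: sign_compose permutation_compose)

lemma rot_eq: "rot a b = cyc (a + b) ^^ b"
proof (rule ext)
  fix i
  show "rot a b i = (cyc (a + b) ^^ b) i"
  proof (cases "i < a")
    case True then show ?thesis by (simp add: cyc_pow rot_def)
  next
    case False
    then show ?thesis
    proof (cases "i < a + b")
      case True
      have "(i + b) mod (a + b) = (i + b - (a + b)) mod (a + b)"
        using False True by (simp add: mod_if)
      also have "\<dots> = i - a" using False True by simp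
      finally show ?thesis using False True by (simp add: cyc_pow rot_def)
    qed (simp add: cyc_pow rot_def)
  qed
qed

lemma rot_perm: "permutation (rot a b)"
  using sign_pow[OF cyc_perm] by (simp add: rot_eq)

lemma sign_rot: "sign (rot a b) = (-1) ^ (a * b)"
proof -
  have "sign (rot a b) = ((-1) ^ (a + b - 1)) ^ b"
    using sign_pow[OF cyc_perm] by (simp add: rot_eq sign_cyc)
  also have "\<dots> = (-1::int) ^ (a * b)"
  proof (cases b)
    case 0 then show ?thesis by simp
  next
    case (Suc c)
    have "(a + b - 1) * b = a * b + c * Suc c" using Suc by (simp add: algebra_simps)
    moreover have "even (c * Suc c)" by simp
    then have "(-1::int) ^ (c * Suc c) = 1" by (rule neg_one_even_power)
    ultimately show ?thesis
      by (simp only: power_mult[symmetric] power_add)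
  qed
  finally show ?thesis .
qed

lemma rot_inv: "rot a b (rot b a i) = i"
  by (auto simp: rot_def)

lemma rot_permutes: "rot a b permutes {0..<a+b}"
proof (rule bij_imp_permutes)
  show "bij_betw (rot a b) {0..<a + b} {0..<a + b}"
    by (rule bij_betw_byWitness[where f'="rot b a"]) (auto simp: rot_inv, auto simp: rot_def)
qed (auto simp: rot_def)

lemma unsh2: "\<sigma> \<in> unshuffles [a, b] \<longleftrightarrow> \<sigma> permutes {0..<a+b} \<and>
   (\<forall>x y. x < y \<longrightarrow> y < a \<longrightarrow> \<sigma> x < \<sigma> y) \<and>
   (\<forall>x y. a \<le> x \<longrightarrow> x < y \<longrightarrow> y < a + b \<longrightarrow> \<sigma> x < \<sigma> y)"
proof -
  have "(\<forall>j<length [a,b]. Q j) \<longleftrightarrow> Q 0 \<and> Q 1" for Q :: "nat \<Rightarrow> bool"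
    by (auto simp: less_Suc_eq)
  then show ?thesis unfolding unshuffles_def by simp
qed

lemma unsh_rot: "\<sigma> \<in> unshuffles [b, a] \<Longrightarrow> \<sigma> \<circ> rot a b \<in> unshuffles [a, b]"
  unfolding unsh2
proof (intro conjI allI impI)
  assume h: "\<sigma> permutes {0..<b + a} \<and> (\<forall>x y. x < y \<longrightarrow> y < b \<longrightarrow> \<sigma> x < \<sigma> y) \<and>
    (\<forall>x y. b \<le> x \<longrightarrow> x < y \<longrightarrow> y < b + a \<longrightarrow> \<sigma> x < \<sigma> y)"
  show "\<sigma> \<circ> rot a b permutes {0..<a + b}"
    using h rot_permutes[of a b] by (simp add: add.commute permutes_compose)
  fix x y
  show "x < y \<Longrightarrow> y < a \<Longrightarrow> (\<sigma> \<circ> rot a b) x < (\<sigma> \<circ> rot a b) y"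
    using h by (simp add: rot_def)
  show "a \<le> x \<Longrightarrow> x < y \<Longrightarrow> y < a + b \<Longrightarrow> (\<sigma> \<circ> rot a b) x < (\<sigma> \<circ> rot a b) y"
    using h by (simp add: rot_def)
qed

lemma bij_rot: "bij_betw (\<lambda>\<sigma>. \<sigma> \<circ> rot a b) (unshuffles [b, a]) (unshuffles [a, b])"
proof (rule bij_betw_byWitness[where f'="\<lambda>\<tau>. \<tau> \<circ> rot b a"])
  have e1: "rot a b \<circ> rot b a = id" "rot b a \<circ> rot a b = id"
    by (auto simp: rot_inv)
  show "\<forall>x\<in>unshuffles [b, a]. x \<circ> rot a b \<circ> rot b a = x"
    using e1 by (simp add: comp_assoc)
  show "\<forall>y\<in>unshuffles [a, b]. y \<circ> rot b a \<circ> rot a b = y"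
    using e1 by (simp add: comp_assoc)
  show "(\<lambda>\<sigma>. \<sigma> \<circ> rot a b) ` unshuffles [b, a] \<subseteq> unshuffles [a, b]"
    using unsh_rot by blast
  show "(\<lambda>\<tau>. \<tau> \<circ> rot b a) ` unshuffles [a, b] \<subseteq> unshuffles [b, a]"
    using unsh_rot by blast
qed

lemma args_rot1: "args us (\<sigma> \<circ> rot a b) 0 a = args us \<sigma> b (b + a)"
  by (rule nth_equalityI) (auto simp: args_def rot_def add.commute)

lemma args_rot2: "args us (\<sigma> \<circ> rot a b) a (a + b) = args us \<sigma> 0 b"
  by (rule nth_equalityI) (auto simp: args_def rot_def)

lemma unsh_permutation: "\<sigma> \<in> unshuffles ks \<Longrightarrow> permutation \<sigma>"
  by (auto simp: unshuffles_def permutation_permutes)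

lemma swap_sum:
  assumes "vector_space (sv :: 'k::field \<Rightarrow> 'v::ab_group_add \<Rightarrow> 'v)"
  shows "(\<Sum>\<tau>\<in>unshuffles [m, n]. sv (of_int (sign \<tau>)) (F (args us \<tau> 0 m) (args us \<tau> m (m + n))))
    = sv ((-1) ^ (m * n)) (\<Sum>\<sigma>\<in>unshuffles [n, m]. sv (of_int (sign \<sigma>)) (F (args us \<sigma> n (n + m)) (args us \<sigma> 0 n)))"
proof -
  interpret vector_space sv by (rule assms)
  have "(\<Sum>\<tau>\<in>unshuffles [m, n]. sv (of_int (sign \<tau>)) (F (args us \<tau> 0 m) (args us \<tau> m (m + n))))
    = (\<Sum>\<sigma>\<in>unshuffles [n, m]. sv (of_int (sign (\<sigma> \<circ> rot m n))) (F (args us (\<sigma> \<circ> rot m n) 0 m) (args us (\<sigma> \<circ> rot m n) m (m + n))))"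
    by (rule sum.reindex_bij_betw[symmetric, OF bij_rot])
  also have "\<dots> = (\<Sum>\<sigma>\<in>unshuffles [n, m]. sv ((-1) ^ (m * n)) (sv (of_int (sign \<sigma>)) (F (args us \<sigma> n (n + m)) (args us \<sigma> 0 n))))"
  proof (rule sum.cong[OF refl])
    fix \<sigma> assume "\<sigma> \<in> unshuffles [n, m]"
    then have "sign (\<sigma> \<circ> rot m n) = sign \<sigma> * (-1) ^ (m * n)"
      by (simp add: sign_compose unsh_permutation rot_perm sign_rot)
    then show "sv (of_int (sign (\<sigma> \<circ> rot m n))) (F (args us (\<sigma> \<circ> rot m n) 0 m) (args us (\<sigma> \<circ> rot m n) m (m + n)))
      = sv ((-1) ^ (m * n)) (sv (of_int (sign \<sigma>)) (F (args us \<sigma> n (n + m)) (args us \<sigma> 0 n)))"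
      by (simp add: args_rot1 args_rot2 mult.commute)
  qed
  also have "\<dots> = sv ((-1) ^ (m * n)) (\<Sum>\<sigma>\<in>unshuffles [n, m]. sv (of_int (sign \<sigma>)) (F (args us \<sigma> n (n + m)) (args us \<sigma> 0 n)))"
    by (simp add: scale_sum_right)
  finally show ?thesis .
qed



lemma args_len[simp]: "length (args us \<sigma> a b) = b - a"
  by (simp add: args_def)

lemma Phi_args: "Phi rho m f (args us \<sigma> 0 (Suc m)) = rho (f (args us \<sigma> 0 m)) (us ! \<sigma> m)"
  by (simp add: Phi_def args_def nth_append)

lemma Phi_snoc: "length L = k \<Longrightarrow> Phi rho k f (L @ [y]) = rho (f L) y"
  by (simp add: Phi_def nth_append)

lemma Phi_cons_snoc: "Suc (length L) = k \<Longrightarrow> Phi rho k f (x # L @ [y]) = rho (f (x # L)) y"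
  using Phi_snoc[of "x # L" k rho f y] by simp

lemma unsh_perm: "\<sigma> \<in> unshuffles ks \<Longrightarrow> sum_list ks = N \<Longrightarrow> \<sigma> permutes {0..<N}"
  by (simp add: unshuffles_def)

lemma take_args: "\<sigma> permutes {0..<N} \<Longrightarrow> b \<le> N \<Longrightarrow> args (take N us) \<sigma> a b = args us \<sigma> a b"
  unfolding args_def
  by (rule map_cong[OF refl]) (auto intro!: nth_take dest: permutes_in_image[where x=x for x])

lemma take_nth: "\<sigma> permutes {0..<N} \<Longrightarrow> i < N \<Longrightarrow> take N us ! \<sigma> i = us ! \<sigma> i"
  by (rule nth_take) (use permutes_in_image[of \<sigma> "{0..<N}" i] in simp)

lemma rho_additive: "lie_rep sg lb sv rho \<Longrightarrow> additive (\<lambda>x. rho x v)"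
  by unfold_locales (simp add: lie_rep_def)

theorem proposition2p8:
  fixes sv :: "'k::field_char_0 \<Rightarrow> 'v::ab_group_add \<Rightarrow> 'v"
    and sg :: "'k \<Rightarrow> 'g::ab_group_add \<Rightarrow> 'g"
    and lb :: "'g \<Rightarrow> 'g \<Rightarrow> 'g"
    and rho :: "'g \<Rightarrow> 'v \<Rightarrow> 'v"
    and P Q :: "'v list \<Rightarrow> 'g"
    and n m :: nat
  assumes "alg_closed TYPE('k)"
    and "vector_space sv" and "fin_dim sv"
    and "lie_algebra sg lb" and "fin_dim sg"
    and "lie_rep sg lb sv rho"
    and "alt_multilinear sv sg n P"
    and "alt_multilinear sv sg m Q"
    and "length us = m + n + 1"
  shows "Phi rho (m + n) (lbr sg lb rho n m P Q) us
       = brC sv n m (Phi rho n P) (Phi rho m Q) us"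
proof -
  interpret V: vector_space sv by (rule assms(2))
  note rep = assms(6)[unfolded lie_rep_def]
  have rs: "rho (sg c x) v = sv c (rho x v)" for c x v using rep by blast
  have rl: "rho (lb x y) v = rho x (rho y v) - rho y (rho x v)" for x y v using rep by blast
  note ra = additive.sum[OF rho_additive[OF assms(6)]] additive.diff[OF rho_additive[OF assms(6)]]
    additive.add[OF rho_additive[OF assms(6)]] additive.zero[OF rho_additive[OF assms(6)]]
  define u where "u = us ! (m + n)"
  define vs where "vs = take (m + n) us"
  define s :: 'k where "s = (-1) ^ (m * n)"
  define A where "A = (\<Sum>\<sigma>\<in>unshuffles [m, 1, n - 1]. sv (of_int (sign \<sigma>))
     (rho (P (rho (Q (args us \<sigma> 0 m)) (us ! \<sigma> m) # args us \<sigma> (m + 1) (m + n))) u))"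
  define B where "B = (\<Sum>\<sigma>\<in>unshuffles [n, 1, m - 1]. sv (of_int (sign \<sigma>))
     (rho (Q (rho (P (args us \<sigma> 0 n)) (us ! \<sigma> n) # args us \<sigma> (n + 1) (m + n))) u))"
  define D where "D = (\<Sum>\<sigma>\<in>unshuffles [n, m]. sv (of_int (sign \<sigma>))
     (rho (P (args us \<sigma> 0 n)) (rho (Q (args us \<sigma> n (n + m))) u)))"
  define D2 where "D2 = (\<Sum>\<sigma>\<in>unshuffles [n, m]. sv (of_int (sign \<sigma>))
     (rho (Q (args us \<sigma> n (n + m))) (rho (P (args us \<sigma> 0 n)) u)))"
  define E where "E = (\<Sum>\<tau>\<in>unshuffles [m, n]. sv (of_int (sign \<tau>))
     (rho (Q (args us \<tau> 0 m)) (rho (P (args us \<tau> m (m + n))) u)))"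
  have ED: "E = sv s D2"
    unfolding E_def D2_def s_def
    by (rule swap_sum[OF assms(2), where F="\<lambda>x y. rho (Q x) (rho (P y) u)"])
  have h1: "rho (if n = 0 then 0 else \<Sum>\<sigma>\<in>unshuffles [m, 1, n - 1]. sg (of_int (sign \<sigma>))
          (P (rho (Q (args vs \<sigma> 0 m)) (vs ! \<sigma> m) # args vs \<sigma> (m + 1) (m + n)))) u
     = (if n = 0 then 0 else A)"
  proof (cases "n = 0")
    case False
    have "rho (\<Sum>\<sigma>\<in>unshuffles [m, 1, n - 1]. sg (of_int (sign \<sigma>))
          (P (rho (Q (args vs \<sigma> 0 m)) (vs ! \<sigma> m) # args vs \<sigma> (m + 1) (m + n)))) u = A"
      unfolding A_def ra(1)
    proof (rule sum.cong[OF refl])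
      fix \<sigma> assume "\<sigma> \<in> unshuffles [m, 1, n - 1]"
      then have p: "\<sigma> permutes {0..<m+n}" by (rule unsh_perm) (use False in simp)
      show "rho (sg (of_int (sign \<sigma>)) (P (rho (Q (args vs \<sigma> 0 m)) (vs ! \<sigma> m) # args vs \<sigma> (m + 1) (m + n)))) u =
        sv (of_int (sign \<sigma>)) (rho (P (rho (Q (args us \<sigma> 0 m)) (us ! \<sigma> m) # args us \<sigma> (m + 1) (m + n))) u)"
        using False unfolding vs_def rs by (simp add: take_args[OF p] take_nth[OF p])
    qed
    then show ?thesis using False by simp
  qed (simp add: ra)
  have h2: "rho (if m = 0 then 0 else \<Sum>\<sigma>\<in>unshuffles [n, 1, m - 1]. sg (of_int (sign \<sigma>))
          (Q (rho (P (args vs \<sigma> 0 n)) (vs ! \<sigma> n) # args vs \<sigma> (n + 1) (m + n)))) u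
     = (if m = 0 then 0 else B)"
  proof (cases "m = 0")
    case False
    have "rho (\<Sum>\<sigma>\<in>unshuffles [n, 1, m - 1]. sg (of_int (sign \<sigma>))
          (Q (rho (P (args vs \<sigma> 0 n)) (vs ! \<sigma> n) # args vs \<sigma> (n + 1) (m + n)))) u = B"
      unfolding B_def ra(1)
    proof (rule sum.cong[OF refl])
      fix \<sigma> assume "\<sigma> \<in> unshuffles [n, 1, m - 1]"
      then have p: "\<sigma> permutes {0..<m+n}" by (rule unsh_perm) (use False in simp)
      show "rho (sg (of_int (sign \<sigma>)) (Q (rho (P (args vs \<sigma> 0 n)) (vs ! \<sigma> n) # args vs \<sigma> (n + 1) (m + n)))) u =
        sv (of_int (sign \<sigma>)) (rho (Q (rho (P (args us \<sigma> 0 n)) (us ! \<sigma> n) # args us \<sigma> (n + 1) (m + n))) u)"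
        using False unfolding vs_def rs by (simp add: take_args[OF p] take_nth[OF p])
    qed
    then show ?thesis using False by simp
  qed (simp add: ra)
  have h3: "rho (\<Sum>\<sigma>\<in>unshuffles [n, m]. sg (of_int (sign \<sigma>))
          (lb (P (args vs \<sigma> 0 n)) (Q (args vs \<sigma> n (n + m))))) u = D - D2"
    unfolding D_def D2_def ra(1) sum_subtractf[symmetric]
  proof (intro sum.cong refl)
    fix \<sigma> assume "\<sigma> \<in> unshuffles [n, m]"
    then have p: "\<sigma> permutes {0..<m+n}" by (rule unsh_perm) simp
    show "rho (sg (of_int (sign \<sigma>)) (lb (P (args vs \<sigma> 0 n)) (Q (args vs \<sigma> n (n + m))))) u =
      sv (of_int (sign \<sigma>)) (rho (P (args us \<sigma> 0 n)) (rho (Q (args us \<sigma> n (n + m))) u)) -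
      sv (of_int (sign \<sigma>)) (rho (Q (args us \<sigma> n (n + m))) (rho (P (args us \<sigma> 0 n)) u))"
      unfolding vs_def rs rl V.scale_right_diff_distrib[symmetric]
      by (simp add: take_args[OF p] add.commute)
  qed
  have L: "Phi rho (m + n) (lbr sg lb rho n m P Q) us
      = (if n = 0 then 0 else A) - sv s (if m = 0 then 0 else B) + sv s (D - D2)"
  proof -
    have "Phi rho (m + n) (lbr sg lb rho n m P Q) us = rho (lbr sg lb rho n m P Q vs) u"
      by (simp add: Phi_def u_def vs_def)
    also have "\<dots> = (if n = 0 then 0 else A) - sv s (if m = 0 then 0 else B) + sv s (D - D2)"
      unfolding lbr_def ra(2) ra(3) rs h1 h2 h3 s_def ..
    finally show ?thesis .
  qed
  have c1: "compC sv n m (Phi rho n P) (Phi rho m Q) us = (if n = 0 then 0 else A) + sv s D"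
  proof -
    have a: "(if n = 0 then 0 else (\<Sum>\<sigma>\<in>unshuffles [m, 1, n - 1]. sv (of_int (sign \<sigma>))
          (Phi rho n P (Phi rho m Q (args us \<sigma> 0 (m + 1)) # args us \<sigma> (m + 1) (m + n) @ [us ! (m + n)]))))
       = (if n = 0 then 0 else A)"
      unfolding A_def u_def
      by (cases "n = 0") (auto intro!: sum.cong simp: Phi_args Phi_cons_snoc)
    have d: "(\<Sum>\<sigma>\<in>unshuffles [n, m]. sv (of_int (sign \<sigma>))
          (Phi rho n P (args us \<sigma> 0 n @ [Phi rho m Q (args us \<sigma> n (n + m) @ [us ! (m + n)])]))) = D"
      unfolding D_def u_def
      by (auto intro!: sum.cong simp: Phi_snoc)
    show ?thesis unfolding compC_def a d s_def ..
  qed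
  have c2: "compC sv m n (Phi rho m Q) (Phi rho n P) us = (if m = 0 then 0 else B) + sv s E"
  proof -
    have a: "(if m = 0 then 0 else (\<Sum>\<sigma>\<in>unshuffles [n, 1, m - 1]. sv (of_int (sign \<sigma>))
          (Phi rho m Q (Phi rho n P (args us \<sigma> 0 (n + 1)) # args us \<sigma> (n + 1) (n + m) @ [us ! (n + m)]))))
       = (if m = 0 then 0 else B)"
      unfolding B_def u_def
      by (cases "m = 0") (auto intro!: sum.cong simp: Phi_args Phi_cons_snoc add.commute)
    have d: "(\<Sum>\<sigma>\<in>unshuffles [m, n]. sv (of_int (sign \<sigma>))
          (Phi rho m Q (args us \<sigma> 0 m @ [Phi rho n P (args us \<sigma> m (m + n) @ [us ! (n + m)])]))) = E"
      unfolding E_def u_def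
      by (auto intro!: sum.cong simp: Phi_snoc add.commute)
    show ?thesis unfolding compC_def a d s_def by (simp add: mult.commute)
  qed
  have s2: "s * s = 1"
    by (simp add: s_def flip: power_mult_distrib)
  show ?thesis
    unfolding L brC_def c1 c2 ED
    by (simp add: V.scale_right_diff_distrib V.scale_right_distrib s2 algebra_simps flip: s_def)
qed

end
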